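(* For all integers $m\geq 3$ and $n\geq 3$, $1\leq \gamma_{sR}(C_m\vee C_n)\leq 4$.
   Context: $C_n$ denotes the cycle on $n$ vertices. For a graph $G=(V,E)$ and $x\in V$, $N_G[x]=\{x\}\cup\{y: xy\in E\}$. A signed Roman dominating function (SRDF) on $G$ is a function $f:V\to\{-1,1,2\}$ such that (a) $\sum_{y\in N_G[x]}f(y)\geq 1$ for every $x\in V$, and (b) every vertex $x$ with $f(x)=-1$ is adjacent to at least one vertex $y$ with $f(y)=2$. The weight of $f$ is $\sum_{x\in V}f(x)$, and $\gamma_{sR}(G)$ is the minimum weight of an SRDF on $G$. The join $G_1\vee G_2$ of two graphs has vertex set $V(G_1)\cup V(G_2)$ (disjoint union) and edge set $E(G_1)\cup E(G_2)\cup\{uv: u\in V(G_1), v\in V(G_2)\}$. *)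

theory Defs
  imports Main
begin

text \<open>A (finite simple) graph is represented by a vertex set V and an adjacency
relation E (symmetric, irreflexive), restricted to V.\<close>

definition closed_nbhd :: "'a set \<Rightarrow> ('a \<Rightarrow> 'a \<Rightarrow> bool) \<Rightarrow> 'a \<Rightarrow> 'a set" where
  "closed_nbhd V E x = {x} \<union> {y \<in> V. E x y}"

definition is_SRDF :: "'a set \<Rightarrow> ('a \<Rightarrow> 'a \<Rightarrow> bool) \<Rightarrow> ('a \<Rightarrow> int) \<Rightarrow> bool" where
  "is_SRDF V E f \<longleftrightarrow>
     (\<forall>x\<in>V. f x \<in> {-1, 1, 2}) \<and>
     (\<forall>x\<in>V. (\<Sum>y\<in>closed_nbhd V E x. f y) \<ge> 1) \<and>
     (\<forall>x\<in>V. f x = -1 \<longrightarrow> (\<exists>y\<in>V. E x y \<and> f y = 2))"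

definition weight :: "'a set \<Rightarrow> ('a \<Rightarrow> int) \<Rightarrow> int" where
  "weight V f = (\<Sum>x\<in>V. f x)"

text \<open>Signed Roman domination number: minimum weight of an SRDF. Functions are
compared only by their values on V (values outside V are irrelevant to weight).\<close>
definition gamma_sR :: "'a set \<Rightarrow> ('a \<Rightarrow> 'a \<Rightarrow> bool) \<Rightarrow> int" where
  "gamma_sR V E = Min {weight V f | f. is_SRDF V E f}"

definition cycle_verts :: "nat \<Rightarrow> nat set" where
  "cycle_verts n = {0..<n}"

definition cycle_adj :: "nat \<Rightarrow> nat \<Rightarrow> nat \<Rightarrow> bool" where
  "cycle_adj n i j \<longleftrightarrow> i < n \<and> j < n \<and> i \<noteq> j \<and> (j = (i + 1) mod n \<or> i = (j + 1) mod n)"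

definition join_verts :: "'a set \<Rightarrow> 'b set \<Rightarrow> ('a + 'b) set" where
  "join_verts V1 V2 = Inl ` V1 \<union> Inr ` V2"

fun join_adj :: "'a set \<Rightarrow> ('a \<Rightarrow> 'a \<Rightarrow> bool) \<Rightarrow> 'b set \<Rightarrow> ('b \<Rightarrow> 'b \<Rightarrow> bool)
                  \<Rightarrow> ('a + 'b) \<Rightarrow> ('a + 'b) \<Rightarrow> bool" where
  "join_adj V1 E1 V2 E2 (Inl u) (Inl v) = E1 u v"
| "join_adj V1 E1 V2 E2 (Inr u) (Inr v) = E2 u v"
| "join_adj V1 E1 V2 E2 (Inl u) (Inr v) = (u \<in> V1 \<and> v \<in> V2)"
| "join_adj V1 E1 V2 E2 (Inr u) (Inl v) = (u \<in> V2 \<and> v \<in> V1)"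

end

theory Submission
  imports Defs
begin


lemma modfacts:
  fixes m x :: nat assumes "m \<ge> 3" "x < m"
  shows "(x+1) mod m \<noteq> x" "(x+m-1) mod m \<noteq> x" "(x+1) mod m \<noteq> (x+m-1) mod m"
    "(x+1) mod m < m" "(x+m-1) mod m < m"
proof -
  consider "x = 0" | "x = m - 1" | "0 < x \<and> x < m - 1" using assms by linarith
  then have "(x+1) mod m \<noteq> x \<and> (x+m-1) mod m \<noteq> x \<and> (x+1) mod m \<noteq> (x+m-1) mod m"
  proof cases
    case 1 then show ?thesis
      using assms by auto
  next
    case 2
    then have a: "(x+1) mod m = 0" using assms by (simp add: Suc_diff_le)
    have b: "(x+m-1) mod m = m - 2"
    proof -
      have "x+m-1 = (m-2) + m" using 2 assms by auto
      then show ?thesis using assms by (simp only: mod_add_self2) simp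
    qed
    show ?thesis
      using a b 2 assms by auto
  next
    case 3
    then have a: "(x+1) mod m = x+1" by auto
    have b: "(x+m-1) mod m = x - 1" using 3
    proof -
      have "x+m-1 = (x-1) + m" using 3 by auto
      then show ?thesis using 3 assms by (simp only: mod_add_self2) simp
    qed
    show ?thesis
      using a b 3 assms by auto
  qed
  then show "(x+1) mod m \<noteq> x" "(x+m-1) mod m \<noteq> x" "(x+1) mod m \<noteq> (x+m-1) mod m" by auto
  show "(x+1) mod m < m" "(x+m-1) mod m < m" using assms by auto
qed

lemma cyc_nb:
  fixes m x :: nat assumes "m \<ge> 3" "x < m"
  shows "{y \<in> {0..<m}. cycle_adj m x y} = {(x+1) mod m, (x+m-1) mod m}"
proof -
  have "y < m \<Longrightarrow> (x = (y+1) mod m) \<longleftrightarrow> (y = (x+m-1) mod m)" for y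
  proof -
    assume y: "y < m"
    have "(y+1) mod m = (x) mod m \<longleftrightarrow> y mod m = (x + (m-1)) mod m"
    proof
      assume "(y+1) mod m = x mod m"
      then have "(y+1 + (m-1)) mod m = (x + (m-1)) mod m" by (metis mod_add_left_eq)
      moreover have "y+1+(m-1) = y + m" using assms by auto
      ultimately show "y mod m = (x + (m-1)) mod m" by simp
    next
      assume "y mod m = (x + (m-1)) mod m"
      then have "(y+1) mod m = (x + (m-1) + 1) mod m" by (metis mod_Suc_eq Suc_eq_plus1)
      moreover have "x + (m-1) + 1 = x + m" using assms by auto
      ultimately show "(y+1) mod m = x mod m" by simp
    qed
    moreover have "x + (m-1) = x+m-1" using assms by auto
    ultimately show ?thesis using y assms by auto
  qed
  then show ?thesis using modfacts[OF assms] assms unfolding cycle_adj_def by auto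
qed

lemma cyc_adj_iff:
  fixes m x :: nat assumes "m \<ge> 3" "x < m" "u < m"
  shows "cycle_adj m x u \<longleftrightarrow> u = (x+1) mod m \<or> u = (x+m-1) mod m"
  using cyc_nb[OF assms(1,2)] assms(3) by (auto simp: set_eq_iff)

lemma cyc_adj_lt: "cycle_adj m x u \<Longrightarrow> u < m \<and> x < m"
  unfolding cycle_adj_def by auto

lemma nb_Inl:
  assumes "m \<ge> 3" "x < m"
  shows "closed_nbhd (join_verts {0..<m} {0..<n}) (join_adj {0..<m} (cycle_adj m) {0..<n} (cycle_adj n)) (Inl x)
       = Inl ` {x, (x+1) mod m, (x+m-1) mod m} \<union> Inr ` {0..<n}"
proof -
  have "{y \<in> join_verts {0..<m} {0..<n}. join_adj {0..<m} (cycle_adj m) {0..<n} (cycle_adj n) (Inl x) y}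
     = Inl ` {(x+1) mod m, (x+m-1) mod m} \<union> Inr ` {0..<n}"
  proof (rule set_eqI)
    fix y show "y \<in> {y \<in> join_verts {0..<m} {0..<n}. join_adj {0..<m} (cycle_adj m) {0..<n} (cycle_adj n) (Inl x) y}
       \<longleftrightarrow> y \<in> Inl ` {(x+1) mod m, (x+m-1) mod m} \<union> Inr ` {0..<n}"
      using cyc_adj_iff[OF assms] modfacts[OF assms] assms
      by (cases y) (auto simp: join_verts_def)
  qed
  then show ?thesis unfolding closed_nbhd_def by auto
qed

lemma nb_Inr:
  assumes "n \<ge> 3" "x < n"
  shows "closed_nbhd (join_verts {0..<m} {0..<n}) (join_adj {0..<m} (cycle_adj m) {0..<n} (cycle_adj n)) (Inr x)
       = Inr ` {x, (x+1) mod n, (x+n-1) mod n} \<union> Inl ` {0..<m}"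
proof -
  have "{y \<in> join_verts {0..<m} {0..<n}. join_adj {0..<m} (cycle_adj m) {0..<n} (cycle_adj n) (Inr x) y}
     = Inr ` {(x+1) mod n, (x+n-1) mod n} \<union> Inl ` {0..<m}"
  proof (rule set_eqI)
    fix y show "y \<in> {y \<in> join_verts {0..<m} {0..<n}. join_adj {0..<m} (cycle_adj m) {0..<n} (cycle_adj n) (Inr x) y}
       \<longleftrightarrow> y \<in> Inr ` {(x+1) mod n, (x+n-1) mod n} \<union> Inl ` {0..<m}"
      using cyc_adj_iff[OF assms] modfacts[OF assms] assms
      by (cases y) (auto simp: join_verts_def)
  qed
  then show ?thesis unfolding closed_nbhd_def by auto
qed

lemma sum_Inl_Inr:
  fixes f :: "'a + 'b \<Rightarrow> int"
  assumes "finite A" "finite B"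
  shows "sum f (Inl ` A \<union> Inr ` B) = (\<Sum>i\<in>A. f (Inl i)) + (\<Sum>j\<in>B. f (Inr j))"
proof -
  have "sum f (Inl ` A \<union> Inr ` B) = sum f (Inl ` A) + sum f (Inr ` B)"
    by (rule sum.union_disjoint) (use assms in auto)
  also have "sum f (Inl ` A) = (\<Sum>i\<in>A. f (Inl i))" by (simp add: sum.reindex)
  also have "sum f (Inr ` B) = (\<Sum>j\<in>B. f (Inr j))" by (simp add: sum.reindex)
  finally show ?thesis .
qed

lemma nbsum_Inl:
  fixes f :: "nat + nat \<Rightarrow> int"
  assumes "m \<ge> 3" "x < m"
  shows "sum f (closed_nbhd (join_verts {0..<m} {0..<n}) (join_adj {0..<m} (cycle_adj m) {0..<n} (cycle_adj n)) (Inl x))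
     = f (Inl x) + f (Inl ((x+1) mod m)) + f (Inl ((x+m-1) mod m)) + (\<Sum>j\<in>{0..<n}. f (Inr j))"
  unfolding nb_Inl[OF assms] using modfacts[OF assms]
  by (subst sum_Inl_Inr) auto

lemma nbsum_Inr:
  fixes f :: "nat + nat \<Rightarrow> int"
  assumes "n \<ge> 3" "x < n"
  shows "sum f (closed_nbhd (join_verts {0..<m} {0..<n}) (join_adj {0..<m} (cycle_adj m) {0..<n} (cycle_adj n)) (Inr x))
     = f (Inr x) + f (Inr ((x+1) mod n)) + f (Inr ((x+n-1) mod n)) + (\<Sum>j\<in>{0..<m}. f (Inl j))"
proof -
  have "Inr ` {x, (x+1) mod n, (x+n-1) mod n} \<union> Inl ` {0..<m} = Inl ` {0..<m} \<union> Inr ` {x, (x+1) mod n, (x+n-1) mod n}"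
    by auto
  then show ?thesis
  unfolding nb_Inr[OF assms] using modfacts[OF assms]
  by (simp only:) (subst sum_Inl_Inr; auto)
qed

lemma weight_join:
  fixes f :: "nat + nat \<Rightarrow> int"
  shows "weight (join_verts {0..<m} {0..<n}) f = (\<Sum>i\<in>{0..<m}. f (Inl i)) + (\<Sum>j\<in>{0..<n}. f (Inr j))"
  unfolding weight_def join_verts_def by (rule sum_Inl_Inr) auto

lemma modinj: "(x::nat) < m \<Longrightarrow> y < m \<Longrightarrow> (x+k) mod m = (y+k) mod m \<Longrightarrow> x = y"
proof -
  have *: "a \<le> b \<Longrightarrow> b < m \<Longrightarrow> (a+k) mod m = (b+k) mod m \<Longrightarrow> a = b" for a b :: nat
  proof -
    assume h: "a \<le> b" "b < m" "(a+k) mod m = (b+k) mod m"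
    then have "m dvd (b+k) - (a+k)" using mod_eq_dvd_iff_nat[of "a+k" "b+k" m] by simp
    then have "m dvd b - a" by simp
    moreover have "b - a < m" using h by simp
    ultimately have "b - a = 0" using dvd_imp_le by (metis gr0I leD)
    then show "a = b" using h by simp
  qed
  assume "x < m" "y < m" "(x+k) mod m = (y+k) mod m"
  then show "x = y" using *[of x y] *[of y x] by (cases "x \<le> y") auto
qed

lemma shift_sum:
  fixes g :: "nat \<Rightarrow> int"
  assumes "0 < m"
  shows "(\<Sum>x\<in>{0..<m}. g ((x+k) mod m)) = (\<Sum>x\<in>{0..<m}. g x)"
proof -
  let ?h = "\<lambda>x. (x+k) mod m"
  have inj: "inj_on ?h {0..<m}"
  proof
    fix x y assume "x \<in> {0..<m}" "y \<in> {0..<m}" "?h x = ?h y"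
    then show "x = y" using modinj by auto 
  qed
  have img: "?h ` {0..<m} = {0..<m}"
    by (rule endo_inj_surj) (use inj assms in auto)
  have "(\<Sum>x\<in>{0..<m}. g x) = (\<Sum>x\<in>?h ` {0..<m}. g x)" using img by simp
  also have "\<dots> = (\<Sum>x\<in>{0..<m}. g (?h x))" by (rule sum.reindex[OF inj, unfolded comp_def])
  finally show ?thesis by simp
qed


lemma lower_side:
  fixes F :: "nat \<Rightarrow> int" and B :: int
  assumes m: "m \<ge> 3" and h: "\<And>x. x < m \<Longrightarrow> F x + F ((x+1) mod m) + F ((x+m-1) mod m) + B \<ge> 1"
  shows "3 * (\<Sum>i\<in>{0..<m}. F i) + int m * B \<ge> int m"
proof -
  have "(\<Sum>x\<in>{0..<m}. (1::int)) \<le> (\<Sum>x\<in>{0..<m}. F x + F ((x+1) mod m) + F ((x+m-1) mod m) + B)"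
    by (rule sum_mono) (use h in auto)
  also have "\<dots> = (\<Sum>x\<in>{0..<m}. F x) + (\<Sum>x\<in>{0..<m}. F ((x+1) mod m)) + (\<Sum>x\<in>{0..<m}. F ((x+(m-1)) mod m)) + int m * B"
    using m by (simp add: sum.distrib)
  also have "\<dots> = 3 * (\<Sum>i\<in>{0..<m}. F i) + int m * B"
    using shift_sum[of m F 1] shift_sum[of m F "m-1"] m by simp
  finally show ?thesis by simp
qed

lemma combine:
  fixes A B :: int
  assumes m: "m \<ge> 3" and n: "n \<ge> 3"
    and h1: "3 * A + int m * B \<ge> int m" and h2: "3 * B + int n * A \<ge> int n"
  shows "A + B \<ge> 1"
proof (cases "B \<le> 0")
  case True
  have "int m * (1 - B) \<ge> 3 * (1 - B)" using m True by (intro mult_right_mono) auto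
  then show ?thesis using h1 by (simp add: algebra_simps)
next
  case False
  show ?thesis
  proof (cases "A \<le> 0")
    case True
    have "int n * (1 - A) \<ge> 3 * (1 - A)" using n True by (intro mult_right_mono) auto
    then show ?thesis using h2 by (simp add: algebra_simps)
  next
    case False
    then show ?thesis using \<open>\<not> B \<le> 0\<close> by simp
  qed
qed

abbreviation "JV m n \<equiv> join_verts {0..<m} {0..<n}"
abbreviation "JE m n \<equiv> join_adj {0..<m} (cycle_adj m) {0..<n} (cycle_adj n)"

lemma srdf_weight_ge:
  fixes f :: "nat + nat \<Rightarrow> int"
  assumes m: "m \<ge> 3" and n: "n \<ge> 3" and f: "is_SRDF (JV m n) (JE m n) f"
  shows "weight (JV m n) f \<ge> 1"
proof -
  let ?A = "\<Sum>i\<in>{0..<m}. f (Inl i)" and ?B = "\<Sum>j\<in>{0..<n}. f (Inr j)"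
  have nb: "\<forall>x\<in>JV m n. (\<Sum>y\<in>closed_nbhd (JV m n) (JE m n) x. f y) \<ge> 1"
    using f unfolding is_SRDF_def by blast
  have "3 * ?A + int m * ?B \<ge> int m"
  proof (rule lower_side[OF m])
    fix x assume x: "x < m"
    then have "Inl x \<in> JV m n" by (simp add: join_verts_def)
    then show "f (Inl x) + f (Inl ((x+1) mod m)) + f (Inl ((x+m-1) mod m)) + ?B \<ge> 1"
    proof -
      have "1 \<le> sum f (closed_nbhd (JV m n) (JE m n) (Inl x))" using nb \<open>Inl x \<in> JV m n\<close> by blast
      then show ?thesis using nbsum_Inl[OF m x, of f n] by simp
    qed
  qed
  moreover have "3 * ?B + int n * ?A \<ge> int n"
  proof (rule lower_side[OF n])
    fix x assume x: "x < n"
    then have "Inr x \<in> JV m n" by (simp add: join_verts_def)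
    then show "f (Inr x) + f (Inr ((x+1) mod n)) + f (Inr ((x+n-1) mod n)) + ?A \<ge> 1"
    proof -
      have "1 \<le> sum f (closed_nbhd (JV m n) (JE m n) (Inr x))" using nb \<open>Inr x \<in> JV m n\<close> by blast
      then show ?thesis using nbsum_Inr[OF n x, of f m] by simp
    qed
  qed
  ultimately have "?A + ?B \<ge> 1" using combine[OF m n] by blast
  then show ?thesis by (simp add: weight_join)
qed

definition g :: "nat \<Rightarrow> nat \<Rightarrow> int" where
  "g k i = (if i = 0 \<or> (i = 2 \<and> even k) then 2 else if even i then 1 else -1)"

definition h :: "nat \<Rightarrow> int" where "h i = (if even i then 1 else -1)"

lemma sum_h: "(\<Sum>i\<in>{0..<k}. h i) = (if even k then 0 else 1)"
  by (induction k) (auto simp: h_def)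

lemma g_split: "g k i = h i + (if i = 0 then 1 else 0) + (if i = 2 \<and> even k then 1 else 0)"
  by (auto simp: g_def h_def)

lemma sum_g: assumes "k \<ge> 3" shows "(\<Sum>i\<in>{0..<k}. g k i) = 2"
proof -
  have "(\<Sum>i\<in>{0..<k}. g k i) = (\<Sum>i\<in>{0..<k}. h i) + (\<Sum>i\<in>{0..<k}. (if i = 0 then 1 else 0))
      + (\<Sum>i\<in>{0..<k}. (if i = 2 \<and> even k then 1 else 0))"
    by (simp add: g_split sum.distrib)
  also have "(\<Sum>i\<in>{0..<k}. (if i = 0 then 1 else 0)) = (1::int)"
    using assms by (simp add: sum.delta)
  also have "(\<Sum>i\<in>{0..<k}. (if i = 2 \<and> even k then 1 else 0)) = (if even k then 1 else (0::int))"
    using assms by (cases "even k") (simp_all add: sum.delta)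
  finally show ?thesis by (simp add: sum_h)
qed

lemma g_ge: "g k i \<ge> -1" and g_even: "even i \<Longrightarrow> g k i \<ge> 1"
  by (auto simp: g_def)

lemma triple_g:
  assumes "k \<ge> 3" "x < k"
  shows "g k x + g k ((x+1) mod k) + g k ((x+k-1) mod k) \<ge> -1"
proof -
  have "even x \<or> even ((x+1) mod k)"
  proof (cases "x + 1 = k")
    case True then show ?thesis by simp
  next
    case False then have "(x+1) mod k = x + 1" using assms by simp
    then show ?thesis by simp
  qed
  then show ?thesis using g_ge[of k] g_even[of _ k]
    by (smt (verit))
qed

definition F0 :: "nat \<Rightarrow> nat \<Rightarrow> nat + nat \<Rightarrow> int" where
  "F0 m n = case_sum (g m) (g n)"

lemma F0_srdf:
  assumes m: "m \<ge> 3" and n: "n \<ge> 3"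
  shows "is_SRDF (JV m n) (JE m n) (F0 m n)" and "weight (JV m n) (F0 m n) = 4"
proof -
  show "weight (JV m n) (F0 m n) = 4"
    by (simp add: weight_join F0_def sum_g m n)
  have vals: "F0 m n v \<in> {-1, 1, 2}" for v
    by (cases v) (auto simp: F0_def g_def)
  have nbs: "(\<Sum>y\<in>closed_nbhd (JV m n) (JE m n) v. F0 m n y) \<ge> 1" if "v \<in> JV m n" for v
  proof (cases v)
    case (Inl x)
    then have x: "x < m" using that by (auto simp: join_verts_def)
    show ?thesis unfolding Inl nbsum_Inl[OF m x]
      using triple_g[OF m x] sum_g[OF n] by (simp add: F0_def)
  next
    case (Inr x)
    then have x: "x < n" using that by (auto simp: join_verts_def)
    show ?thesis unfolding Inr nbsum_Inr[OF n x]
      using triple_g[OF n x] sum_g[OF m] by (simp add: F0_def)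
  qed
  have neg: "\<exists>y\<in>JV m n. JE m n v y \<and> F0 m n y = 2" if "v \<in> JV m n" for v
  proof (cases v)
    case (Inl x)
    then have x: "x < m" using that by (auto simp: join_verts_def)
    show ?thesis by (rule bexI[of _ "Inr 0"]) (use x n Inl in \<open>auto simp: F0_def g_def join_verts_def\<close>)
  next
    case (Inr x)
    then have x: "x < n" using that by (auto simp: join_verts_def)
    show ?thesis by (rule bexI[of _ "Inl 0"]) (use x m Inr in \<open>auto simp: F0_def g_def join_verts_def\<close>)
  qed
  show "is_SRDF (JV m n) (JE m n) (F0 m n)"
    unfolding is_SRDF_def using vals nbs neg by blast
qed

lemma weight_bounds:
  fixes f :: "'a \<Rightarrow> int"
  assumes "finite V" "is_SRDF V E f"
  shows "weight V f \<in> {- int (card V) .. 2 * int (card V)}"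
proof -
  have v: "\<forall>x\<in>V. f x \<in> {-1,1,2}" using assms(2) unfolding is_SRDF_def by blast
  have "(\<Sum>x\<in>V. (-1::int)) \<le> (\<Sum>x\<in>V. f x)" by (rule sum_mono) (use v in auto)
  moreover have "(\<Sum>x\<in>V. f x) \<le> (\<Sum>x\<in>V. (2::int))" by (rule sum_mono) (use v in auto)
  ultimately show ?thesis by (simp add: weight_def)
qed

theorem mainTheorem5:
  fixes m n :: nat
  assumes "m \<ge> 3" and "n \<ge> 3"
  shows "1 \<le> gamma_sR (join_verts (cycle_verts m) (cycle_verts n))
                       (join_adj (cycle_verts m) (cycle_adj m) (cycle_verts n) (cycle_adj n))
       \<and> gamma_sR (join_verts (cycle_verts m) (cycle_verts n))
                       (join_adj (cycle_verts m) (cycle_adj m) (cycle_verts n) (cycle_adj n)) \<le> 4"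
proof -
  let ?S = "{weight (JV m n) f | f. is_SRDF (JV m n) (JE m n) f}"
  have fin: "finite (JV m n)" by (simp add: join_verts_def)
  have "?S \<subseteq> {- int (card (JV m n)) .. 2 * int (card (JV m n))}"
    using weight_bounds[OF fin] by blast
  then have finS: "finite ?S" using finite_subset by blast
  have inS: "4 \<in> ?S" using F0_srdf[OF assms] by (metis (mono_tags, lifting) mem_Collect_eq)
  have g1: "Min ?S \<ge> 1"
  proof -
    have "Min ?S \<in> ?S" using finS inS by (intro Min_in) auto
    then show ?thesis using srdf_weight_ge[OF assms] by auto
  qed
  have g2: "Min ?S \<le> 4" using finS inS by (rule Min_le)
  show ?thesis using g1 g2 unfolding gamma_sR_def cycle_verts_def by simp
qed
end
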